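(* Let $A$ and $B$ be $n\times n$ binary matrices (entries in $\mathbb{Z}_2$) with zero diagonal. The facets-pairing structures $\mathcal{F}_A$ and $\mathcal{F}_B$ on $\mathcal{C}^n$ are equivalent if and only if there is an $n\times n$ permutation matrix $P$ with $B=P^{-1}AP$.
   Context: $[\pm n]=\{\pm1,\dots,\pm n\}$, $\mathcal{C}^n=\{x\in\mathbb{R}^n: -\tfrac14\le x_i\le\tfrac14\}$; $\mathbf{F}(i)$, $\mathbf{F}(-i)$ ($1\le i\le n$) are the facets in $\{x_i=\tfrac14\}$, $\{x_i=-\tfrac14\}$. For a binary matrix $A$ write $A^i_k$ for its $(i,k)$ entry (viewed as $0$ or $1$). The facets-pairing structure $\mathcal{F}_A$ pairs $\mathbf{F}(j)$ with $\mathbf{F}(-j)$ via $\tau^A_j:\mathbf{F}(j)\to\mathbf{F}(-j)$, $\tau^A_j(x_1,\dots,x_n)=(y_1,\dots,y_n)$ with $y_{|j|}=-x_{|j|}$ and $y_k=(-1)^{A^{|j|}_k}x_k$ for $k\ne|j|$. Two facets-pairing structures given by pairings $\mathbf{F}(j)\mapsto\mathbf{F}(\omega(j))$ with maps $\tau_j$, and $\mathbf{F}(j)\mapsto\mathbf{F}(\omega'(j))$ with maps $\tau'_j$, are equivalent if there is a symmetry $h$ of $\mathcal{C}^n$ (Euclidean isometry preserving $\mathcal{C}^n$) such that $\tau_j=h^{-1}\circ\tau'_{j'}\circ h$ on $\mathbf{F}(j)$ for every $j\in[\pm n]$, where $\mathbf{F}(j')=h(\mathbf{F}(j))$. *)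

theory Defs
  imports "HOL-Analysis.Analysis" "HOL-Library.Z2"
begin

text \<open>Signed indices [+-n]: (i, True) stands for +i, (i, False) for -i.\<close>
type_synonym 'n sidx = "'n \<times> bool"

definition cube :: "(real^'n) set" where
  "cube = {x. \<forall>i. -(1/4) \<le> x$i \<and> x$i \<le> 1/4}"

definition facet :: "'n sidx \<Rightarrow> (real^'n) set" where
  "facet j = {x \<in> cube. x $ fst j = (if snd j then 1/4 else -(1/4))}"

definition cube_symmetry :: "(real^'n \<Rightarrow> real^'n) \<Rightarrow> bool" where
  "cube_symmetry h \<longleftrightarrow> (\<forall>x y. dist (h x) (h y) = dist x y) \<and> h ` cube = cube"

text \<open>Equivalence of two facets-pairing structures given by their facet maps tau, tau'
  (tau j maps facet j onto its paired facet).\<close>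
definition fps_equiv ::
  "('n sidx \<Rightarrow> real^'n \<Rightarrow> real^'n) \<Rightarrow> ('n sidx \<Rightarrow> real^'n \<Rightarrow> real^'n) \<Rightarrow> bool" where
  "fps_equiv \<tau> \<tau>' \<longleftrightarrow> (\<exists>h. cube_symmetry h \<and>
      (\<forall>j j'. facet j' = h ` facet j \<longrightarrow> (\<forall>x \<in> facet j. \<tau> j x = inv h (\<tau>' j' (h x)))))"

text \<open>The facet maps of F_A, for a binary matrix A (entries in Z_2 = bit).\<close>
definition tauA :: "bit^'n^'n \<Rightarrow> 'n sidx \<Rightarrow> real^'n \<Rightarrow> real^'n" where
  "tauA A j x = (\<chi> k. if k = fst j then - (x $ k)
                      else if A $ fst j $ k = 1 then - (x $ k) else x $ k)"

definition perm_matrix :: "bit^'n^'n \<Rightarrow> bool" where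
  "perm_matrix P \<longleftrightarrow> (\<forall>i. \<exists>!j. P $ i $ j = 1) \<and> (\<forall>j. \<exists>!i. P $ i $ j = 1)"

end

theory Submission
  imports Defs
begin

definition Pm :: "('n::finite \<Rightarrow> 'n) \<Rightarrow> bit^'n^'n" where
  "Pm p = (\<chi> k l. if l = p k then 1 else 0)"

lemma delta_l: "(\<Sum>k\<in>(UNIV::'n::finite set). (if k = c then (1::'a::semiring_1) else 0) * g k) = g c"
  by (subst sum.cong[OF refl, of _ _ "\<lambda>k. if k = c then g k else 0"]) auto
lemma delta_r: "(\<Sum>k\<in>(UNIV::'n::finite set). g k * (if k = c then (1::'a::semiring_1) else 0)) = g c"
  by (subst sum.cong[OF refl, of _ _ "\<lambda>k. if k = c then g k else 0"]) auto
lemma Pm_at: "Pm p $ k $ l = (if l = p k then 1 else 0)"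
  by (simp add: Pm_def)
lemma Pm_at2: "bij p \<Longrightarrow> Pm p $ k $ l = (if k = inv p l then 1 else 0)"
  by (simp add: Pm_def) (metis bij_inv_eq_iff)
lemma Pm_at3: "bij p \<Longrightarrow> Pm (inv p) $ k $ l = (if l = inv p k then 1 else 0)"
  by (simp add: Pm_def)

lemma Pm_mul: assumes "bij p" shows "Pm p ** Pm (inv p) = mat 1"
  unfolding matrix_matrix_mult_def mat_def vec_eq_iff
  using assms by (simp add: Pm_at Pm_at2[of "inv p"] bij_imp_bij_inv inv_inv_eq delta_l bij_is_inj del: mult_bit_eq_and)

lemma Pm_mul2: assumes "bij p" shows "Pm (inv p) ** Pm p = mat 1"
  unfolding matrix_matrix_mult_def mat_def vec_eq_iff
  using assms by (simp add: Pm_at3 Pm_at delta_l bij_is_surj surj_f_inv_f del: mult_bit_eq_and)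

lemma Pm_inv: assumes "bij p" shows "matrix_inv (Pm p) = Pm (inv p)"
proof -
  let ?Q = "SOME M. Pm p ** M = mat 1 \<and> M ** Pm p = mat 1"
  have "Pm p ** ?Q = mat 1 \<and> ?Q ** Pm p = mat 1"
    by (rule someI[of _ "Pm (inv p)"]) (simp add: Pm_mul Pm_mul2 assms)
  then have h: "?Q ** Pm p = mat 1" by blast
  have "?Q = ?Q ** mat 1" by simp
  also have "\<dots> = ?Q ** (Pm p ** Pm (inv p))" using Pm_mul[OF assms] by simp
  also have "\<dots> = (?Q ** Pm p) ** Pm (inv p)" by (simp add: matrix_mul_assoc)
  also have "\<dots> = Pm (inv p)" using h by simp
  finally have "?Q = Pm (inv p)" .
  then show ?thesis by (simp add: matrix_inv_def)
qed

lemma Pm_conj: assumes "bij p"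
  shows "matrix_inv (Pm p) ** A ** Pm p = (\<chi> a b. A $ inv p a $ inv p b)"
  unfolding Pm_inv[OF assms] matrix_matrix_mult_def vec_eq_iff
  using assms by (simp add: Pm_at3 Pm_at2 delta_l delta_r del: mult_bit_eq_and)

lemma perm_Pm: "bij p \<Longrightarrow> perm_matrix (Pm p)"
  unfolding perm_matrix_def Pm_def
  by (auto simp: bij_iff) (metis bij_pointE)

lemma perm_matrix_Pm: assumes "perm_matrix P" shows "\<exists>p. bij p \<and> P = Pm p"
proof -
  define p where "p k = (THE l. P $ k $ l = 1)" for k
  have p1: "P $ k $ l = 1 \<longleftrightarrow> l = p k" for k l
  proof -
    have "\<exists>!l. P $ k $ l = 1" using assms unfolding perm_matrix_def by blast
    then show ?thesis unfolding p_def by (metis (mono_tags, lifting) the1_equality)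
  qed
  have "inj p"
  proof
    fix a b assume "p a = p b"
    then have "P $ a $ p a = 1" "P $ b $ p a = 1" using p1 by auto
    then show "a = b" using assms unfolding perm_matrix_def by blast
  qed
  then have "bij p" by (simp add: bij_def finite_UNIV_inj_surj)
  moreover have "P = Pm p" unfolding Pm_def vec_eq_iff
  proof (intro allI)
    fix i ia
    show "P $ i $ ia = (\<chi> k l. if l = p k then 1 else 0) $ i $ ia"
      using p1[of i ia] bit_not_one_iff[of "P $ i $ ia"] by auto
  qed
  ultimately show ?thesis by blast
qed

definition sp :: "('n::finite \<Rightarrow> 'n) \<Rightarrow> ('n \<Rightarrow> real) \<Rightarrow> real^'n \<Rightarrow> real^'n" where
  "sp \<sigma> \<epsilon> x = (\<chi> k. \<epsilon> (inv \<sigma> k) * x $ inv \<sigma> k)"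

definition spi :: "('n::finite \<Rightarrow> 'n) \<Rightarrow> ('n \<Rightarrow> real) \<Rightarrow> real^'n \<Rightarrow> real^'n" where
  "spi \<sigma> \<epsilon> y = (\<chi> j. \<epsilon> j * y $ \<sigma> j)"

definition sgns :: "('n \<Rightarrow> real) \<Rightarrow> bool" where
  "sgns \<epsilon> \<longleftrightarrow> (\<forall>i. \<epsilon> i = 1 \<or> \<epsilon> i = -1)"

lemma sgns_sq: assumes "sgns \<epsilon>" shows "\<epsilon> i * \<epsilon> i = 1" "\<bar>\<epsilon> i\<bar> = 1"
proof -
  have "\<epsilon> i = 1 \<or> \<epsilon> i = -1" using assms unfolding sgns_def by blast
  then show "\<epsilon> i * \<epsilon> i = 1" "\<bar>\<epsilon> i\<bar> = 1" by auto
qed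

lemma sgns_sq2: "sgns \<epsilon> \<Longrightarrow> \<epsilon> i * (\<epsilon> i * z) = z"
  by (metis mult.assoc sgns_sq(1) mult_1)

lemma all_bij: assumes "bij \<sigma>" shows "(\<forall>k. P k) \<longleftrightarrow> (\<forall>j. P (\<sigma> j))"
proof
  assume a: "\<forall>j. P (\<sigma> j)"
  show "\<forall>k. P k"
  proof
    fix k
    have "k = \<sigma> (inv \<sigma> k)" using assms by (simp add: bij_is_surj surj_f_inv_f)
    then show "P k" using a by metis
  qed
qed auto

lemma sp_at: "bij \<sigma> \<Longrightarrow> sp \<sigma> \<epsilon> x $ \<sigma> j = \<epsilon> j * x $ j"
  unfolding sp_def by (simp add: bij_is_inj)

lemma spi_sp: "bij \<sigma> \<Longrightarrow> sgns \<epsilon> \<Longrightarrow> spi \<sigma> \<epsilon> (sp \<sigma> \<epsilon> x) = x"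
  unfolding spi_def by (simp add: vec_eq_iff sp_at mult.assoc[symmetric] sgns_sq)

lemma sp_spi: "bij \<sigma> \<Longrightarrow> sgns \<epsilon> \<Longrightarrow> sp \<sigma> \<epsilon> (spi \<sigma> \<epsilon> y) = y"
  unfolding vec_eq_iff by (subst all_bij, assumption) (simp add: spi_def sp_at mult.assoc[symmetric] sgns_sq)

lemma sp_image: assumes "bij \<sigma>" "sgns \<epsilon>"
  shows "y \<in> sp \<sigma> \<epsilon> ` S \<longleftrightarrow> spi \<sigma> \<epsilon> y \<in> S"
  using assms by (metis image_iff sp_spi spi_sp)

lemma cube_iff: "x \<in> cube \<longleftrightarrow> (\<forall>i. \<bar>x $ i\<bar> \<le> 1/4)"
proof -
  have "(-(1/4) \<le> x$i \<and> x$i \<le> 1/4) \<longleftrightarrow> \<bar>x $ i\<bar> \<le> 1/4" for i by (auto simp: abs_if)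
  then show ?thesis unfolding cube_def by simp
qed

lemma sp_cube: assumes "bij \<sigma>" "sgns \<epsilon>" shows "sp \<sigma> \<epsilon> ` cube = cube"
proof -
  have "y \<in> sp \<sigma> \<epsilon> ` cube \<longleftrightarrow> y \<in> cube" for y
    unfolding sp_image[OF assms] cube_iff
    by (subst (2) all_bij[OF assms(1)]) (simp add: spi_def abs_mult sgns_sq[OF assms(2)])
  then show ?thesis by blast
qed

lemma sp_facet: assumes "bij \<sigma>" "sgns \<epsilon>"
  shows "sp \<sigma> \<epsilon> ` facet (i, s) = facet (\<sigma> i, if \<epsilon> i = 1 then s else \<not> s)"
proof -
  have "y \<in> sp \<sigma> \<epsilon> ` facet (i,s) \<longleftrightarrow> y \<in> facet (\<sigma> i, if \<epsilon> i = 1 then s else \<not> s)" for y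
  proof -
    have c: "spi \<sigma> \<epsilon> y \<in> cube \<longleftrightarrow> y \<in> cube"
      unfolding cube_iff
      by (subst (2) all_bij[OF assms(1)]) (simp add: spi_def abs_mult sgns_sq[OF assms(2)])
    have "\<epsilon> i = 1 \<or> \<epsilon> i = -1" using assms(2) unfolding sgns_def by blast
    then show ?thesis
      unfolding sp_image[OF assms] facet_def using c
      by (auto simp: spi_def)
  qed
  then show ?thesis by blast
qed

lemma facet_inj: assumes "facet j = facet j'" shows "j = j'"
proof -
  obtain i s where j: "j = (i,s)" by force
  obtain i' s' where j': "j' = (i',s')" by force
  define x :: "real^'a" where "x = (\<chi> k. if k = i then (if s then 1/4 else -(1/4)) else 0)"
  have "x \<in> facet j" unfolding j facet_def cube_def x_def by auto
  then have "x \<in> facet j'" using assms by simp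
  then show ?thesis unfolding j j' facet_def x_def
    by (auto split: if_splits)
qed

lemma sp_inner: assumes "bij \<sigma>" "sgns \<epsilon>"
  shows "sp \<sigma> \<epsilon> x \<bullet> sp \<sigma> \<epsilon> x = x \<bullet> x"
proof -
  have "sp \<sigma> \<epsilon> x \<bullet> sp \<sigma> \<epsilon> x = (\<Sum>k\<in>\<sigma> ` UNIV. sp \<sigma> \<epsilon> x $ k * sp \<sigma> \<epsilon> x $ k)"
    using assms(1) by (simp add: inner_vec_def bij_is_surj)
  also have "\<dots> = (\<Sum>j\<in>UNIV. x $ j * x $ j)"
    by (subst sum.reindex) (use assms in \<open>auto simp: bij_is_inj sp_at sgns_sq algebra_simps sgns_sq2\<close>)
  finally show ?thesis by (simp add: inner_vec_def)
qed

lemma sp_diff: "sp \<sigma> \<epsilon> x - sp \<sigma> \<epsilon> y = sp \<sigma> \<epsilon> (x - y)"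
  unfolding sp_def by (simp add: vec_eq_iff algebra_simps)

lemma sp_sym: assumes "bij \<sigma>" "sgns \<epsilon>" shows "cube_symmetry (sp \<sigma> \<epsilon>)"
  unfolding cube_symmetry_def
  using sp_cube[OF assms] sp_inner[OF assms]
  by (simp add: dist_norm norm_eq_sqrt_inner sp_diff)

lemma inner_self_sum: "(x::real^'n) \<bullet> x = (\<Sum>i\<in>UNIV. x$i * x$i)"
  by (simp add: inner_vec_def)

lemma sq_le: assumes "\<bar>a\<bar> \<le> 1/4" "\<bar>b\<bar> \<le> 1/4"
  shows "(a - b) * (a - b) \<le> (1/4::real)"
proof -
  have "0 \<le> (1/2 - (a-b)) * (1/2 + (a-b))" using assms
    by (intro mult_nonneg_nonneg) (auto simp: abs_if split: if_splits)
  then show ?thesis by (simp add: algebra_simps)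
qed

lemma sq_eq: assumes "\<bar>a\<bar> \<le> 1/4" "\<bar>b\<bar> \<le> 1/4" "(a - b) * (a - b) = (1/4::real)"
  shows "b = -a \<and> \<bar>a\<bar> = 1/4"
proof -
  have "(a - b - 1/2) * (a - b + 1/2) = 0" using assms(3) by (simp add: algebra_simps)
  then have "a - b = 1/2 \<or> a - b = -1/2" by auto
  then show ?thesis using assms(1,2) by (auto simp: abs_if split: if_splits)
qed

lemma diam:
  fixes x y :: "real^'n"
  assumes "x \<in> cube" "y \<in> cube"
  shows "(x-y)\<bullet>(x-y) \<le> real CARD('n)/4"
    and "(x-y)\<bullet>(x-y) = real CARD('n)/4 \<Longrightarrow> \<forall>i. y$i = -x$i \<and> \<bar>x$i\<bar> = 1/4"
proof -
  have le: "(x$i - y$i) * (x$i - y$i) \<le> 1/4" for i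
    using assms sq_le unfolding cube_iff by blast
  have c: "(\<Sum>i\<in>(UNIV::'n set). (1/4::real)) = real CARD('n)/4" by simp
  show "(x-y)\<bullet>(x-y) \<le> real CARD('n)/4"
    unfolding inner_self_sum c[symmetric] by (rule sum_mono) (simp only: vector_minus_component le)
  assume eq: "(x-y)\<bullet>(x-y) = real CARD('n)/4"
  have "(x$i - y$i) * (x$i - y$i) = 1/4" for i
  proof (rule ccontr)
    assume "(x$i - y$i) * (x$i - y$i) \<noteq> 1/4"
    then have "(x$i - y$i) * (x$i - y$i) < 1/4" using le[of i] by linarith
    then have "(\<Sum>i\<in>UNIV. (x$i - y$i) * (x$i - y$i)) < (\<Sum>i\<in>(UNIV::'n set). (1/4::real))"
      using le by (intro sum_strict_mono_ex1) auto
    then show False using eq unfolding inner_self_sum c by simp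
  qed
  then show "\<forall>i. y$i = -x$i \<and> \<bar>x$i\<bar> = 1/4"
    using assms sq_eq unfolding cube_iff by blast
qed

lemma vert_diam:
  fixes x :: "real^'n"
  assumes "\<forall>i. \<bar>x$i\<bar> = 1/4"
  shows "x \<in> cube" "-x \<in> cube" "(x - -x)\<bullet>(x - -x) = real CARD('n)/4"
proof -
  show "x \<in> cube" "-x \<in> cube" using assms unfolding cube_iff by auto
  have h1: "(x - -x)$i * (x - -x)$i = 1/4" for i
  proof -
    have "(x - -x)$i * (x - -x)$i = 4 * (\<bar>x$i\<bar> * \<bar>x$i\<bar>)" by (simp add: algebra_simps)
    then show ?thesis using assms by simp
  qed
  then show "(x - -x)\<bullet>(x - -x) = real CARD('n)/4"
    unfolding inner_self_sum by (simp only: h1) simp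
qed

lemma sym_sp:
  fixes h :: "real^'n \<Rightarrow> real^'n"
  assumes "cube_symmetry h"
  shows "\<exists>\<sigma> \<epsilon>. bij \<sigma> \<and> sgns \<epsilon> \<and> h = sp \<sigma> \<epsilon>"
proof -
  have iso: "\<And>x y. dist (h x) (h y) = dist x y" and img: "h ` cube = cube"
    using assms unfolding cube_symmetry_def by auto
  have hc: "x \<in> cube \<Longrightarrow> h x \<in> cube" for x using img by blast
  have Q: "(h x - h y) \<bullet> (h x - h y) = (x - y) \<bullet> (x - y)" for x y
    using iso[of x y] by (metis dist_norm power2_norm_eq_inner)
  have vert: "h (-x) = - h x \<and> (\<forall>i. \<bar>h x $ i\<bar> = 1/4)" if "\<forall>i. \<bar>x$i\<bar> = 1/4" for x
  proof -
    have d: "(h x - h (-x)) \<bullet> (h x - h (-x)) = real CARD('n)/4"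
      using Q vert_diam[OF that] by simp
    have "\<forall>i. h (-x) $ i = - h x $ i \<and> \<bar>h x $ i\<bar> = 1/4"
      using diam(2)[OF hc hc d] vert_diam[OF that] by blast
    then show ?thesis by (simp add: vec_eq_iff)
  qed
  define v :: "real^'n" where "v = (\<chi> i. 1/4)"
  have vv: "\<forall>i. \<bar>v$i\<bar> = 1/4" by (simp add: v_def)
  have h0: "h 0 = 0"
  proof -
    define g where "g x = h x - h 0" for x
    have "linear g"
      by (rule isometry_linear) (unfold g_def dist_norm, use iso[unfolded dist_norm] in auto)
    then have "g (-v) = - g v" by (rule linear_neg)
    then have "h (-v) - h 0 = - (h v - h 0)" by (simp add: g_def)
    then have "- h v - h 0 = - h v + h 0" using vert[OF vv] by simp
    then show ?thesis by (simp add: vec_eq_iff)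
  qed
  have "orthogonal_transformation h"
    using h0 iso orthogonal_transformation_isometry by blast
  then have lin: "linear h" and ip: "\<And>a b. h a \<bullet> h b = a \<bullet> b"
    unfolding orthogonal_transformation_def by auto
  define e where "e i = axis i (1::real)" for i :: 'n
  have coord: "h (e i) $ k = 0 \<or> \<bar>h (e i) $ k\<bar> = 1" for i k
  proof -
    define w :: "real^'n" where "w = (\<chi> k. if k = i then -(1/4) else 1/4)"
    have ww: "\<forall>i. \<bar>w$i\<bar> = 1/4" by (simp add: w_def)
    have "v - w = (1/2) *\<^sub>R e i" by (simp add: v_def w_def e_def vec_eq_iff axis_def)
    then have "h v - h w = (1/2) *\<^sub>R h (e i)"
      using lin by (metis linear_diff linear_scale)
    then have "h (e i) $ k = 2 * (h v $ k - h w $ k)" by (simp add: vec_eq_iff algebra_simps)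
    moreover have "\<bar>h v $ k\<bar> = 1/4" "\<bar>h w $ k\<bar> = 1/4" using vert[OF vv] vert[OF ww] by auto
    ultimately show ?thesis by (auto simp: abs_if split: if_splits)
  qed
  have one: "(\<Sum>k\<in>UNIV. h (e i) $ k * h (e i) $ k) = 1" for i
    using ip[of "e i" "e i"] unfolding inner_self_sum[symmetric] by (simp add: e_def inner_axis_axis)
  have sqc: "h (e i) $ k * h (e i) $ k = (if h (e i) $ k = 0 then 0 else 1)" for i k
  proof -
    have "h (e i) $ k = 0 \<or> h (e i) $ k = 1 \<or> h (e i) $ k = -1"
      using coord[of i k] by (auto simp: abs_if split: if_splits)
    then show ?thesis by auto
  qed
  have ex1: "\<exists>!k. h (e i) $ k \<noteq> 0" for i
  proof -
    have "\<exists>k. h (e i) $ k \<noteq> 0"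
    proof (rule ccontr)
      assume "\<not> ?thesis"
      then show False using one[of i] by simp
    qed
    moreover have "k1 = k2" if "h (e i) $ k1 \<noteq> 0" "h (e i) $ k2 \<noteq> 0" for k1 k2
    proof (rule ccontr)
      assume ne: "k1 \<noteq> k2"
      have "(\<Sum>k\<in>{k1,k2}. h (e i) $ k * h (e i) $ k) \<le> (\<Sum>k\<in>UNIV. h (e i) $ k * h (e i) $ k)"
        by (rule sum_mono2) auto
      moreover have "(\<Sum>k\<in>{k1,k2}. h (e i) $ k * h (e i) $ k) = 2"
        using ne that sqc[of i k1] sqc[of i k2] by simp
      ultimately show False using one[of i] by simp
    qed
    ultimately show ?thesis by blast
  qed
  define \<sigma> where "\<sigma> i = (SOME k. h (e i) $ k \<noteq> 0)" for i
  define \<epsilon> where "\<epsilon> i = h (e i) $ \<sigma> i" for i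
  have snz: "h (e i) $ \<sigma> i \<noteq> 0" for i
    unfolding \<sigma>_def using ex1[of i] by (metis (mono_tags, lifting) someI_ex)
  have z: "k \<noteq> \<sigma> i \<Longrightarrow> h (e i) $ k = 0" for i k
    using ex1[of i] snz[of i] by blast
  have sg: "sgns \<epsilon>"
    unfolding sgns_def \<epsilon>_def
  proof
    fix i
    show "h (e i) $ \<sigma> i = 1 \<or> h (e i) $ \<sigma> i = -1"
      using coord[of i "\<sigma> i"] snz[of i] by (auto simp: abs_if split: if_splits)
  qed
  have he: "h (e i) = \<epsilon> i *\<^sub>R e (\<sigma> i)" for i
    unfolding vec_eq_iff using z[of _ i] by (auto simp: e_def axis_def \<epsilon>_def)
  have "inj \<sigma>"
  proof
    fix i j assume eq: "\<sigma> i = \<sigma> j"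
    show "i = j"
    proof (rule ccontr)
      assume "i \<noteq> j"
      then have "e i \<bullet> e j = 0" by (simp add: e_def inner_axis_axis)
      moreover have "h (e i) \<bullet> h (e j) = \<epsilon> i * \<epsilon> j"
        unfolding he eq by (simp add: e_def inner_axis_axis)
      moreover have "\<epsilon> i * \<epsilon> j \<noteq> 0" using sgns_sq(2)[OF sg, of i] sgns_sq(2)[OF sg, of j] by auto
      ultimately show False using ip by simp
    qed
  qed
  then have bs: "bij \<sigma>" by (simp add: bij_def finite_UNIV_inj_surj)
  have hx: "h x $ \<sigma> j = \<epsilon> j * x $ j" for x j
  proof -
    have "e (\<sigma> j) = \<epsilon> j *\<^sub>R h (e j)" unfolding he using sgns_sq(1)[OF sg, of j] by (simp add: scaleR_scaleR)
    then have "h x $ \<sigma> j = h x \<bullet> (\<epsilon> j *\<^sub>R h (e j))"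
      by (metis e_def inner_axis inner_real_def mult.right_neutral)
    also have "\<dots> = \<epsilon> j * (x \<bullet> e j)" by (simp add: ip)
    also have "\<dots> = \<epsilon> j * x $ j" by (simp add: e_def inner_axis)
    finally show ?thesis .
  qed
  have "h = sp \<sigma> \<epsilon>"
  proof
    fix x
    show "h x = sp \<sigma> \<epsilon> x"
      unfolding vec_eq_iff by (subst all_bij[OF bs]) (simp add: hx sp_at[OF bs])
  qed
  then show ?thesis using bs sg by blast
qed

lemma bit_eq_from_one: "((a::bit) = 1 \<longleftrightarrow> b = 1) \<Longrightarrow> a = b"
  by (metis bit_not_one_iff)

theorem mainTheorem9:
  fixes A B :: "bit^'n^'n"
  assumes "\<forall>i. A $ i $ i = 0" and "\<forall>i. B $ i $ i = 0"
  shows "fps_equiv (tauA A) (tauA B) \<longleftrightarrow>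
         (\<exists>P. perm_matrix P \<and> B = matrix_inv P ** A ** P)"
proof
  assume "fps_equiv (tauA A) (tauA B)"
  then obtain h where hs: "cube_symmetry h" and
    hp: "\<And>j j'. facet j' = h ` facet j \<Longrightarrow> (\<forall>x \<in> facet j. tauA A j x = inv h (tauA B j' (h x)))"
    unfolding fps_equiv_def by blast
  obtain \<sigma> \<epsilon> where bs: "bij \<sigma>" and sg: "sgns \<epsilon>" and hd: "h = sp \<sigma> \<epsilon>"
    using sym_sp[OF hs] by blast
  have surjh: "surj h" unfolding hd using sp_spi[OF bs sg] by (metis surjI)
  have AB: "A $ i $ m = B $ \<sigma> i $ \<sigma> m" for i m
  proof (cases "m = i")
    case True then show ?thesis using assms by simp
  next
    case False
    define j where "j = (i, True)"
    define j' where "j' = (\<sigma> i, if \<epsilon> i = 1 then True else False)"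
    define x :: "real^'n" where "x = (\<chi> k. 1/4)"
    have fj: "facet j' = h ` facet j" unfolding hd j_def j'_def sp_facet[OF bs sg] by simp
    have xf: "x \<in> facet j" by (simp add: x_def j_def facet_def cube_def)
    have "tauA A j x = inv h (tauA B j' (h x))" using hp[OF fj] xf by blast
    then have "h (tauA A j x) = tauA B j' (h x)" using surjh by (simp add: surj_f_inv_f)
    then have e0: "h (tauA A j x) $ \<sigma> m = tauA B j' (h x) $ \<sigma> m" by simp
    have ne: "\<sigma> m \<noteq> \<sigma> i" using False bs by (metis bij_is_inj inj_eq)
    have xm: "x $ k = 1/4" for k by (simp add: x_def)
    have hxm: "h x $ \<sigma> m = \<epsilon> m * (1/4)" unfolding hd sp_at[OF bs] xm ..
    have L: "h (tauA A j x) $ \<sigma> m = \<epsilon> m * (if A $ i $ m = 1 then - (1/4) else 1/4)"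
      unfolding hd sp_at[OF bs] using False by (simp add: tauA_def j_def xm)
    have R: "tauA B j' (h x) $ \<sigma> m = (if B $ \<sigma> i $ \<sigma> m = 1 then - (\<epsilon> m * (1/4)) else \<epsilon> m * (1/4))"
      unfolding tauA_def j'_def using ne by (simp add: hxm)
    have eq: "\<epsilon> m * (if A $ i $ m = 1 then - (1/4) else 1/4) =
        (if B $ \<sigma> i $ \<sigma> m = 1 then - (\<epsilon> m * (1/4)) else \<epsilon> m * (1/4))"
      using e0 L R by simp
    have "\<epsilon> m \<noteq> 0" using sgns_sq(2)[OF sg, of m] by auto
    then have "A $ i $ m = 1 \<longleftrightarrow> B $ \<sigma> i $ \<sigma> m = 1"
      using eq by (auto split: if_splits)
    then show ?thesis by (rule bit_eq_from_one)
  qed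
  have "B = (\<chi> a b. A $ inv \<sigma> a $ inv \<sigma> b)"
    unfolding vec_eq_iff
  proof (intro allI)
    fix a b
    have "a = \<sigma> (inv \<sigma> a)" "b = \<sigma> (inv \<sigma> b)" using bs by (simp_all add: bij_is_surj surj_f_inv_f)
    then show "B $ a $ b = (\<chi> a b. A $ inv \<sigma> a $ inv \<sigma> b) $ a $ b"
      using AB[of "inv \<sigma> a" "inv \<sigma> b"] by simp
  qed
  then have "B = matrix_inv (Pm \<sigma>) ** A ** Pm \<sigma>" using Pm_conj[OF bs] by simp
  then show "\<exists>P. perm_matrix P \<and> B = matrix_inv P ** A ** P" using perm_Pm[OF bs] by blast
next
  assume "\<exists>P. perm_matrix P \<and> B = matrix_inv P ** A ** P"
  then obtain p where bp: "bij p" and Bd: "B = (\<chi> a b. A $ inv p a $ inv p b)"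
    using perm_matrix_Pm Pm_conj by metis
  define h where "h = sp p (\<lambda>_. 1)"
  have sg: "sgns (\<lambda>_. 1::real)" by (simp add: sgns_def)
  have injh: "inj h" unfolding h_def using spi_sp[OF bp sg] by (metis injI)
  have Bpp: "B $ p i $ p m = A $ i $ m" for i m using bp by (simp add: Bd bij_is_inj)
  have "cube_symmetry h" unfolding h_def by (rule sp_sym[OF bp sg])
  moreover have "\<forall>x \<in> facet j. tauA A j x = inv h (tauA B j' (h x))"
    if fj: "facet j' = h ` facet j" for j j'
  proof
    fix x assume "x \<in> facet j"
    obtain i s where j: "j = (i, s)" by force
    have "facet j' = facet (p i, s)" using fj unfolding j h_def sp_facet[OF bp sg] by simp
    then have j': "j' = (p i, s)" by (rule facet_inj)
    have "h (tauA A j x) = tauA B j' (h x)"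
      unfolding vec_eq_iff
      by (subst all_bij[OF bp]) (simp add: h_def sp_at[OF bp] tauA_def j j' Bpp bij_is_inj[OF bp] inj_eq)
    then show "tauA A j x = inv h (tauA B j' (h x))" using injh by (metis inv_f_f)
  qed
  ultimately show "fps_equiv (tauA A) (tauA B)" unfolding fps_equiv_def by blast
qed

end
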